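(* Let $P$ be a finite poset with a least element $0$ and a greatest element $1$. Then: (a) $P$ is a lattice if and only if $\Delta_\wedge(P)=0$, if and only if $\Delta_\vee(P)=0$. (b) If $\Delta_\wedge(P)\le 1$, then $v_*(x)=|\downarrow x|$ is a (isotone) lower valuation on $P$. (c) If $\Delta_\vee(P)\le 1$, then $v^*(x)=|\uparrow x|$ is an (antitone) lower valuation on $P$.
   Context: For a poset $(P,\le)$ and $x\in P$: $\downarrow x=\{x'\in P: x'\le x\}$, $\uparrow x=\{x'\in P: x\le x'\}$. For $S\subseteq P$, $\mathbf{max}(S)$ and $\mathbf{min}(S)$ denote the sets of maximal and minimal elements of $S$. Define $D_\wedge(x,y)=|\downarrow x\cap\downarrow y|-\max\{|\downarrow z|: z\in\mathbf{max}(\downarrow x\cap\downarrow y)\}$, $\Delta_\wedge(P)=\max_{x,y\in P}D_\wedge(x,y)$; $D_\vee(x,y)=|\uparrow x\cap\uparrow y|-\min\{|\uparrow z|: z\in\mathbf{min}(\uparrow x\cap\uparrow y)\}$, $\Delta_\vee(P)=\max_{x,y\in P}D_\vee(x,y)$. A function $f:P\to\mathbb{R}$ is isotone if $x\le y\Rightarrow f(x)\le f(y)$, antitone if $x\le y\Rightarrow f(x)\ge f(y)$. For a monotone $f$ define $f^-(x,y)=\sup\{f(z):z\in\downarrow x\cap\downarrow y\}$ if $f$ isotone, $\inf\{\cdot\}$ if antitone; $f^+(x,y)=\inf\{f(z):z\in\uparrow x\cap\uparrow y\}$ if $f$ isotone, $\sup\{\cdot\}$ if antitone; with $\inf\emptyset=+\infty$,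 $\sup\emptyset=-\infty$. A lower valuation is either an isotone $v$ with $\downarrow x\cap\downarrow y\neq\emptyset$ for all $x,y$, or an antitone $v$ with $\uparrow x\cap\uparrow y\neq\emptyset$ for all $x,y$, satisfying $v(x)+v(y)\le v^-(x,y)+v^+(x,y)$ for all $x,y\in P$. *)

theory Defs
  imports Main "HOL-Library.Extended_Real"
begin

text \<open>Posets are modelled as types of class order (the whole type is the poset).\<close>

definition down :: "'a::order \<Rightarrow> 'a set" where
  "down x = {x'. x' \<le> x}"

definition up :: "'a::order \<Rightarrow> 'a set" where
  "up x = {x'. x \<le> x'}"

definition maxset :: "'a::order set \<Rightarrow> 'a set" where
  "maxset S = {z \<in> S. \<forall>w \<in> S. z \<le> w \<longrightarrow> w = z}"

definition minset :: "'a::order set \<Rightarrow> 'a set" where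
  "minset S = {z \<in> S. \<forall>w \<in> S. w \<le> z \<longrightarrow> w = z}"

definition D_meet :: "'a::order \<Rightarrow> 'a \<Rightarrow> int" where
  "D_meet x y = int (card (down x \<inter> down y))
     - Max ((\<lambda>z. int (card (down z))) ` maxset (down x \<inter> down y))"

definition Delta_meet :: "'a::order itself \<Rightarrow> int" where
  "Delta_meet (_ :: 'a itself) = Max {D_meet x y | x y :: 'a. True}"

definition D_join :: "'a::order \<Rightarrow> 'a \<Rightarrow> int" where
  "D_join x y = int (card (up x \<inter> up y))
     - Min ((\<lambda>z. int (card (up z))) ` minset (up x \<inter> up y))"

definition Delta_join :: "'a::order itself \<Rightarrow> int" where
  "Delta_join (_ :: 'a itself) = Max {D_join x y | x y :: 'a. True}"

definition is_lattice :: "'a::order itself \<Rightarrow> bool" where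
  "is_lattice (_ :: 'a itself) \<longleftrightarrow>
     (\<forall>x y :: 'a. (\<exists>m. m \<le> x \<and> m \<le> y \<and> (\<forall>z. z \<le> x \<and> z \<le> y \<longrightarrow> z \<le> m))
               \<and> (\<exists>j. x \<le> j \<and> y \<le> j \<and> (\<forall>z. x \<le> z \<and> y \<le> z \<longrightarrow> j \<le> z)))"

text \<open>f^- and f^+ for isotone resp. antitone f, valued in the extended reals
  (Sup {} = -\<infinity>, Inf {} = +\<infinity>).\<close>
definition fminus_iso :: "('a::order \<Rightarrow> real) \<Rightarrow> 'a \<Rightarrow> 'a \<Rightarrow> ereal" where
  "fminus_iso f x y = Sup ((\<lambda>z. ereal (f z)) ` (down x \<inter> down y))"

definition fplus_iso :: "('a::order \<Rightarrow> real) \<Rightarrow> 'a \<Rightarrow> 'a \<Rightarrow> ereal" where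
  "fplus_iso f x y = Inf ((\<lambda>z. ereal (f z)) ` (up x \<inter> up y))"

definition fminus_anti :: "('a::order \<Rightarrow> real) \<Rightarrow> 'a \<Rightarrow> 'a \<Rightarrow> ereal" where
  "fminus_anti f x y = Inf ((\<lambda>z. ereal (f z)) ` (down x \<inter> down y))"

definition fplus_anti :: "('a::order \<Rightarrow> real) \<Rightarrow> 'a \<Rightarrow> 'a \<Rightarrow> ereal" where
  "fplus_anti f x y = Sup ((\<lambda>z. ereal (f z)) ` (up x \<inter> up y))"

definition lower_valuation :: "('a::order \<Rightarrow> real) \<Rightarrow> bool" where
  "lower_valuation v \<longleftrightarrow>
     (mono v \<and> (\<forall>x y :: 'a. down x \<inter> down y \<noteq> {}) \<and>
        (\<forall>x y. ereal (v x) + ereal (v y) \<le> fminus_iso v x y + fplus_iso v x y))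
   \<or> (antimono v \<and> (\<forall>x y :: 'a. up x \<inter> up y \<noteq> {}) \<and>
        (\<forall>x y. ereal (v x) + ereal (v y) \<le> fminus_anti v x y + fplus_anti v x y))"

end

theory Submission
  imports Defs
begin

lemma fin_set2: "finite {f x y | (x::'a::finite) (y::'a). True}"
proof -
  have "{f x y | x y. True} = (\<lambda>(x,y). f x y) ` UNIV" by auto
  thus ?thesis by simp
qed

lemma maxset_nonempty:
  fixes S :: "'a::{order,finite} set"
  assumes "S \<noteq> {}" shows "maxset S \<noteq> {}"
  using finite_has_maximal[of S] assms unfolding maxset_def by auto

lemma minset_nonempty:
  fixes S :: "'a::{order,finite} set"
  assumes "S \<noteq> {}" shows "minset S \<noteq> {}"
  using finite_has_minimal[of S] assms unfolding minset_def by auto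

lemma D_meet_wit:
  fixes x y :: "'a::{order,finite}"
  assumes "down x \<inter> down y \<noteq> {}"
  shows "\<exists>z. z \<in> maxset (down x \<inter> down y) \<and>
     D_meet x y = int (card (down x \<inter> down y)) - int (card (down z))"
proof -
  let ?S = "maxset (down x \<inter> down y)"
  let ?I = "(\<lambda>z. int (card (down z))) ` ?S"
  have "?I \<noteq> {}" using maxset_nonempty[OF assms] by simp
  hence "Max ?I \<in> ?I" by (intro Max_in) auto
  then obtain z where "z \<in> ?S" "Max ?I = int (card (down z))" by auto
  thus ?thesis unfolding D_meet_def by auto
qed

lemma D_join_wit:
  fixes x y :: "'a::{order,finite}"
  assumes "up x \<inter> up y \<noteq> {}"
  shows "\<exists>z. z \<in> minset (up x \<inter> up y) \<and>
     D_join x y = int (card (up x \<inter> up y)) - int (card (up z))"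
proof -
  let ?S = "minset (up x \<inter> up y)"
  let ?I = "(\<lambda>z. int (card (up z))) ` ?S"
  have "?I \<noteq> {}" using minset_nonempty[OF assms] by simp
  hence "Min ?I \<in> ?I" by (intro Min_in) auto
  then obtain z where "z \<in> ?S" "Min ?I = int (card (up z))" by auto
  thus ?thesis unfolding D_join_def by auto
qed

definition has_meet :: "'a::order \<Rightarrow> 'a \<Rightarrow> bool" where
  "has_meet x y \<longleftrightarrow> (\<exists>m. m \<le> x \<and> m \<le> y \<and> (\<forall>z. z \<le> x \<and> z \<le> y \<longrightarrow> z \<le> m))"

definition has_join :: "'a::order \<Rightarrow> 'a \<Rightarrow> bool" where
  "has_join x y \<longleftrightarrow> (\<exists>j. x \<le> j \<and> y \<le> j \<and> (\<forall>z. x \<le> z \<and> y \<le> z \<longrightarrow> j \<le> z))"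

lemma is_lattice_iff: "is_lattice TYPE('a::order) \<longleftrightarrow> (\<forall>x y::'a. has_meet x y \<and> has_join x y)"
  unfolding is_lattice_def has_meet_def has_join_def by blast

lemma meets_joins:
  fixes top x y :: "'a::{order,finite}"
  assumes greatest: "\<forall>x. x \<le> top" and M: "\<forall>x y::'a. has_meet x y"
  shows "has_join x y"
proof -
  let ?U = "{u. x \<le> u \<and> y \<le> u}"
  have "top \<in> ?U" using greatest by auto
  then obtain j where j: "j \<in> ?U" and jmin: "\<forall>u. u \<in> ?U \<longrightarrow> card (down j) \<le> card (down u)"
    using ex_has_least_nat[of "\<lambda>u. u \<in> ?U" top "\<lambda>u. card (down u)"] by blast
  have "j \<le> u" if u: "u \<in> ?U" for u
  proof -
    obtain m where m: "m \<le> j" "m \<le> u" "\<forall>z. z \<le> j \<and> z \<le> u \<longrightarrow> z \<le> m"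
      using M unfolding has_meet_def by blast
    have "m \<in> ?U" using m(3) j u by auto
    hence c: "card (down j) \<le> card (down m)" using jmin by blast
    have "down m \<subseteq> down j" using m(1) unfolding down_def by auto
    hence "down m = down j" using c by (intro card_seteq) auto
    hence "j \<le> m" unfolding down_def by auto
    thus ?thesis using m(2) by simp
  qed
  thus ?thesis unfolding has_join_def using j by blast
qed

lemma joins_meets:
  fixes bot x y :: "'a::{order,finite}"
  assumes least: "\<forall>x. bot \<le> x" and J: "\<forall>x y::'a. has_join x y"
  shows "has_meet x y"
proof -
  let ?U = "{u. u \<le> x \<and> u \<le> y}"
  have "bot \<in> ?U" using least by auto
  then obtain j where j: "j \<in> ?U" and jmin: "\<forall>u. u \<in> ?U \<longrightarrow> card (up j) \<le> card (up u)"
    using ex_has_least_nat[of "\<lambda>u. u \<in> ?U" bot "\<lambda>u. card (up u)"] by blast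
  have "u \<le> j" if u: "u \<in> ?U" for u
  proof -
    obtain m where m: "j \<le> m" "u \<le> m" "\<forall>z. j \<le> z \<and> u \<le> z \<longrightarrow> m \<le> z"
      using J unfolding has_join_def by blast
    have "m \<in> ?U" using m(3) j u by auto
    hence c: "card (up j) \<le> card (up m)" using jmin by blast
    have "up m \<subseteq> up j" using m(1) unfolding up_def by auto
    hence "up m = up j" using c by (intro card_seteq) auto
    hence "m \<le> j" unfolding up_def by auto
    thus ?thesis using m(2) by simp
  qed
  thus ?thesis unfolding has_meet_def using j by blast
qed

lemma D_meet_le0:
  fixes x y :: "'a::{order,finite}"
  assumes ne: "down x \<inter> down y \<noteq> {}" and D: "D_meet x y \<le> 0"
  shows "has_meet x y"
proof -
  obtain z where z: "z \<in> maxset (down x \<inter> down y)"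
     "D_meet x y = int (card (down x \<inter> down y)) - int (card (down z))"
    using D_meet_wit[OF ne] by blast
  have zi: "z \<le> x" "z \<le> y" using z(1) unfolding maxset_def down_def by auto
  have sub: "down z \<subseteq> down x \<inter> down y" using zi unfolding down_def by auto
  have "card (down x \<inter> down y) \<le> card (down z)" using z(2) D by simp
  hence eq: "down z = down x \<inter> down y" using sub by (intro card_seteq) auto
  show ?thesis unfolding has_meet_def
    by (rule exI[of _ z]) (use zi eq in \<open>auto simp: down_def\<close>)
qed

lemma D_join_le0:
  fixes x y :: "'a::{order,finite}"
  assumes ne: "up x \<inter> up y \<noteq> {}" and D: "D_join x y \<le> 0"
  shows "has_join x y"
proof -
  obtain z where z: "z \<in> minset (up x \<inter> up y)"
     "D_join x y = int (card (up x \<inter> up y)) - int (card (up z))"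
    using D_join_wit[OF ne] by blast
  have zi: "x \<le> z" "y \<le> z" using z(1) unfolding minset_def up_def by auto
  have sub: "up z \<subseteq> up x \<inter> up y" using zi unfolding up_def by auto
  have "card (up x \<inter> up y) \<le> card (up z)" using z(2) D by simp
  hence eq: "up z = up x \<inter> up y" using sub by (intro card_seteq) auto
  show ?thesis unfolding has_join_def
    by (rule exI[of _ z]) (use zi eq in \<open>auto simp: up_def\<close>)
qed

lemma meet_D0:
  fixes x y :: "'a::{order,finite}"
  assumes "has_meet x y"
  shows "D_meet x y = 0"
proof -
  obtain m where m: "m \<le> x" "m \<le> y" "\<forall>z. z \<le> x \<and> z \<le> y \<longrightarrow> z \<le> m"
    using assms unfolding has_meet_def by blast
  have eq: "down x \<inter> down y = down m" using m unfolding down_def by (auto intro: order_trans)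
  hence ne: "down x \<inter> down y \<noteq> {}" unfolding down_def by auto
  obtain z where z: "z \<in> maxset (down x \<inter> down y)"
     "D_meet x y = int (card (down x \<inter> down y)) - int (card (down z))"
    using D_meet_wit[OF ne] by blast
  have zm: "z \<le> x" "z \<le> y" "\<forall>w. w \<le> x \<and> w \<le> y \<and> z \<le> w \<longrightarrow> w = z"
    using z(1) unfolding maxset_def down_def by auto
  have "z = m" using zm m by (metis order.antisym)
  thus ?thesis using z(2) eq by simp
qed

lemma join_D0:
  fixes x y :: "'a::{order,finite}"
  assumes "has_join x y"
  shows "D_join x y = 0"
proof -
  obtain m where m: "x \<le> m" "y \<le> m" "\<forall>z. x \<le> z \<and> y \<le> z \<longrightarrow> m \<le> z"
    using assms unfolding has_join_def by blast
  have eq: "up x \<inter> up y = up m" using m unfolding up_def by (auto intro: order_trans)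
  hence ne: "up x \<inter> up y \<noteq> {}" unfolding up_def by auto
  obtain z where z: "z \<in> minset (up x \<inter> up y)"
     "D_join x y = int (card (up x \<inter> up y)) - int (card (up z))"
    using D_join_wit[OF ne] by blast
  have zm: "x \<le> z" "y \<le> z" "\<forall>w. x \<le> w \<and> y \<le> w \<and> w \<le> z \<longrightarrow> w = z"
    using z(1) unfolding minset_def up_def by auto
  have "z = m" using zm m by (metis order.antisym)
  thus ?thesis using z(2) eq by simp
qed

lemma D_meet_le_Delta: "D_meet (x::'a::{order,finite}) y \<le> Delta_meet TYPE('a)"
  unfolding Delta_meet_def by (rule Max_ge[OF fin_set2]) auto

lemma D_join_le_Delta: "D_join (x::'a::{order,finite}) y \<le> Delta_join TYPE('a)"
  unfolding Delta_join_def by (rule Max_ge[OF fin_set2]) auto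

lemma Delta_meet_0:
  assumes "\<forall>x y::'a::{order,finite}. D_meet x y = 0"
  shows "Delta_meet TYPE('a) = 0"
proof -
  have "{D_meet x y | x y :: 'a. True} = {0}" using assms by auto
  thus ?thesis unfolding Delta_meet_def by simp
qed

lemma Delta_join_0:
  assumes "\<forall>x y::'a::{order,finite}. D_join x y = 0"
  shows "Delta_join TYPE('a) = 0"
proof -
  have "{D_join x y | x y :: 'a. True} = {0}" using assms by auto
  thus ?thesis unfolding Delta_join_def by simp
qed

theorem mainTheorem8:
  fixes bot top :: "'a::{order, finite}"
  assumes least: "\<forall>x. bot \<le> x"
    and greatest: "\<forall>x. x \<le> top"
  shows "(is_lattice TYPE('a) \<longleftrightarrow> Delta_meet TYPE('a) = 0)
       \<and> (is_lattice TYPE('a) \<longleftrightarrow> Delta_join TYPE('a) = 0)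
       \<and> (Delta_meet TYPE('a) \<le> 1 \<longrightarrow>
            mono (\<lambda>x::'a. real (card (down x))) \<and> lower_valuation (\<lambda>x::'a. real (card (down x))))
       \<and> (Delta_join TYPE('a) \<le> 1 \<longrightarrow>
            antimono (\<lambda>x::'a. real (card (up x))) \<and> lower_valuation (\<lambda>x::'a. real (card (up x))))"
proof -
  have nd: "down x \<inter> down y \<noteq> {}" for x y :: 'a
    using least unfolding down_def by auto
  have nu: "up x \<inter> up y \<noteq> {}" for x y :: 'a
    using greatest unfolding up_def by auto
  have A1: "is_lattice TYPE('a) \<longleftrightarrow> Delta_meet TYPE('a) = 0"
  proof
    assume "is_lattice TYPE('a)"
    thus "Delta_meet TYPE('a) = 0" using meet_D0 Delta_meet_0 unfolding is_lattice_iff by blast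
  next
    assume D: "Delta_meet TYPE('a) = 0"
    have M: "\<forall>x y::'a. has_meet x y"
      using D_meet_le0[OF nd] D_meet_le_Delta D by (metis (no_types))
    thus "is_lattice TYPE('a)" unfolding is_lattice_iff using meets_joins[OF greatest M] by blast
  qed
  have A2: "is_lattice TYPE('a) \<longleftrightarrow> Delta_join TYPE('a) = 0"
  proof
    assume "is_lattice TYPE('a)"
    thus "Delta_join TYPE('a) = 0" using join_D0 Delta_join_0 unfolding is_lattice_iff by blast
  next
    assume D: "Delta_join TYPE('a) = 0"
    have J: "\<forall>x y::'a. has_join x y"
      using D_join_le0[OF nu] D_join_le_Delta D by (metis (no_types))
    thus "is_lattice TYPE('a)" unfolding is_lattice_iff using joins_meets[OF least J] by blast
  qed
  have B: "mono (\<lambda>x::'a. real (card (down x))) \<and> lower_valuation (\<lambda>x::'a. real (card (down x)))"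
    if D1: "Delta_meet TYPE('a) \<le> 1"
  proof -
    let ?v = "\<lambda>x::'a. real (card (down x))"
    have mono: "mono ?v"
      by (rule monoI) (auto intro!: card_mono simp: down_def intro: order_trans)
    have ineq: "ereal (?v x) + ereal (?v y) \<le> fminus_iso ?v x y + fplus_iso ?v x y" for x y
    proof -
      have "\<exists>a b. card (down x) + card (down y) \<le> a + b \<and>
              ereal (real a) \<le> fminus_iso ?v x y \<and> ereal (real b) \<le> fplus_iso ?v x y"
      proof (cases "x \<le> y \<or> y \<le> x")
        case True
        then obtain p q where pq: "p \<le> q" "{p,q} = {x,y}" by blast
        have "ereal (?v p) \<le> fminus_iso ?v x y" unfolding fminus_iso_def
          by (rule SUP_upper) (use pq in \<open>auto simp: down_def\<close>)
        moreover have "ereal (?v q) \<le> fplus_iso ?v x y" unfolding fplus_iso_def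
        proof (rule INF_greatest)
          fix u assume "u \<in> up x \<inter> up y"
          hence "q \<le> u" using pq unfolding up_def by auto
          thus "ereal (?v q) \<le> ereal (?v u)" using mono by (simp add: mono_def)
        qed
        moreover have "card (down x) + card (down y) = card (down p) + card (down q)"
          using pq by (auto simp: doubleton_eq_iff)
        ultimately show ?thesis by (intro exI[of _ "card (down p)"] exI[of _ "card (down q)"]) auto
      next
        case False
        obtain z where z: "z \<in> maxset (down x \<inter> down y)"
           "D_meet x y = int (card (down x \<inter> down y)) - int (card (down z))"
          using D_meet_wit[OF nd] by blast
        have "D_meet x y \<le> 1" using D_meet_le_Delta[of x y] D1 by simp
        hence c1: "card (down x \<inter> down y) \<le> card (down z) + 1" using z(2) by simp
        have "ereal (?v z) \<le> fminus_iso ?v x y" unfolding fminus_iso_def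
          by (rule SUP_upper) (use z(1) in \<open>auto simp: maxset_def\<close>)
        moreover have "ereal (real (card (down x \<union> down y) + 1)) \<le> fplus_iso ?v x y"
          unfolding fplus_iso_def
        proof (rule INF_greatest)
          fix u assume "u \<in> up x \<inter> up y"
          hence u: "x \<le> u" "y \<le> u" unfolding up_def by auto
          have nu: "u \<notin> down x \<union> down y" using u False unfolding down_def by auto
          have "insert u (down x \<union> down y) \<subseteq> down u"
            using u unfolding down_def by (auto intro: order_trans)
          hence "card (insert u (down x \<union> down y)) \<le> card (down u)" by (intro card_mono) auto
          hence "card (down x \<union> down y) + 1 \<le> card (down u)" using nu by simp
          thus "ereal (real (card (down x \<union> down y) + 1)) \<le> ereal (?v u)" by simp
        qed
        moreover have "card (down x) + card (down y) = card (down x \<union> down y) + card (down x \<inter> down y)"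
          by (rule card_Un_Int) auto
        ultimately show ?thesis using c1
          by (intro exI[of _ "card (down z)"] exI[of _ "card (down x \<union> down y) + 1"]) auto
      qed
      then obtain a b where ab: "card (down x) + card (down y) \<le> a + b"
        "ereal (real a) \<le> fminus_iso ?v x y" "ereal (real b) \<le> fplus_iso ?v x y" by blast
      have "ereal (?v x) + ereal (?v y) = ereal (real (card (down x) + card (down y)))" by simp
      also have "\<dots> \<le> ereal (real (a + b))" using ab(1) by simp
      also have "\<dots> = ereal (real a) + ereal (real b)" by simp
      also have "\<dots> \<le> fminus_iso ?v x y + fplus_iso ?v x y" using ab(2,3) by (rule add_mono)
      finally show ?thesis .
    qed
    show ?thesis using mono nd ineq unfolding lower_valuation_def by blast
  qed
  have C: "antimono (\<lambda>x::'a. real (card (up x))) \<and> lower_valuation (\<lambda>x::'a. real (card (up x)))"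
    if D1: "Delta_join TYPE('a) \<le> 1"
  proof -
    let ?v = "\<lambda>x::'a. real (card (up x))"
    have anti: "antimono ?v"
      by (rule antimonoI) (auto intro!: card_mono simp: up_def intro: order_trans)
    have ineq: "ereal (?v x) + ereal (?v y) \<le> fminus_anti ?v x y + fplus_anti ?v x y" for x y
    proof -
      have "\<exists>a b. card (up x) + card (up y) \<le> a + b \<and>
              ereal (real a) \<le> fminus_anti ?v x y \<and> ereal (real b) \<le> fplus_anti ?v x y"
      proof (cases "x \<le> y \<or> y \<le> x")
        case True
        then obtain p q where pq: "p \<le> q" "{p,q} = {x,y}" by blast
        have "ereal (?v q) \<le> fplus_anti ?v x y" unfolding fplus_anti_def
          by (rule SUP_upper) (use pq in \<open>auto simp: up_def\<close>)
        moreover have "ereal (?v p) \<le> fminus_anti ?v x y" unfolding fminus_anti_def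
        proof (rule INF_greatest)
          fix u assume "u \<in> down x \<inter> down y"
          hence "u \<le> p" using pq unfolding down_def by auto
          thus "ereal (?v p) \<le> ereal (?v u)" using anti by (simp add: antimono_def)
        qed
        moreover have "card (up x) + card (up y) = card (up p) + card (up q)"
          using pq by (auto simp: doubleton_eq_iff)
        ultimately show ?thesis by (intro exI[of _ "card (up p)"] exI[of _ "card (up q)"]) auto
      next
        case False
        obtain z where z: "z \<in> minset (up x \<inter> up y)"
           "D_join x y = int (card (up x \<inter> up y)) - int (card (up z))"
          using D_join_wit[OF nu] by blast
        have "D_join x y \<le> 1" using D_join_le_Delta[of x y] D1 by simp
        hence c1: "card (up x \<inter> up y) \<le> card (up z) + 1" using z(2) by simp
        have "ereal (?v z) \<le> fplus_anti ?v x y" unfolding fplus_anti_def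
          by (rule SUP_upper) (use z(1) in \<open>auto simp: minset_def\<close>)
        moreover have "ereal (real (card (up x \<union> up y) + 1)) \<le> fminus_anti ?v x y"
          unfolding fminus_anti_def
        proof (rule INF_greatest)
          fix u assume "u \<in> down x \<inter> down y"
          hence u: "u \<le> x" "u \<le> y" unfolding down_def by auto
          have nu: "u \<notin> up x \<union> up y" using u False unfolding up_def by auto
          have "insert u (up x \<union> up y) \<subseteq> up u"
            using u unfolding up_def by (auto intro: order_trans)
          hence "card (insert u (up x \<union> up y)) \<le> card (up u)" by (intro card_mono) auto
          hence "card (up x \<union> up y) + 1 \<le> card (up u)" using nu by simp
          thus "ereal (real (card (up x \<union> up y) + 1)) \<le> ereal (?v u)" by simp
        qed
        moreover have "card (up x) + card (up y) = card (up x \<union> up y) + card (up x \<inter> up y)"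
          by (rule card_Un_Int) auto
        ultimately show ?thesis using c1
          by (intro exI[of _ "card (up x \<union> up y) + 1"] exI[of _ "card (up z)"]) auto
      qed
      then obtain a b where ab: "card (up x) + card (up y) \<le> a + b"
        "ereal (real a) \<le> fminus_anti ?v x y" "ereal (real b) \<le> fplus_anti ?v x y" by blast
      have "ereal (?v x) + ereal (?v y) = ereal (real (card (up x) + card (up y)))" by simp
      also have "\<dots> \<le> ereal (real (a + b))" using ab(1) by simp
      also have "\<dots> = ereal (real a) + ereal (real b)" by simp
      also have "\<dots> \<le> fminus_anti ?v x y + fplus_anti ?v x y" using ab(2,3) by (rule add_mono)
      finally show ?thesis .
    qed
    show ?thesis using anti nu ineq unfolding lower_valuation_def by blast
  qed
  show ?thesis using A1 A2 B C by blast
qed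

end
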